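(* Let $\nabla$ be a metric connection on an anchored metric bundle $(E,\langle\cdot,\cdot\rangle,a_E)$ over $M$, and let $\circ^\nabla$ be the bracket $\langle e_1\circ^\nabla e_2,e_3\rangle=\langle\nabla_{e_1}e_2,e_3\rangle-\langle\nabla_{e_2}e_1,e_3\rangle+\langle\nabla_{e_3}e_1,e_2\rangle$. Then $(E,\langle\cdot,\cdot\rangle,\circ^\nabla,a_E)$ is a pre-Courant algebroid if and only if either of the following equivalent conditions holds: (1) for all $e_1,e_2\in\Gamma(E)$ the operator $C^\nabla(e_1,e_2):\Gamma(E)\to\Gamma(E)$ is $C^\infty(M)$-linear; (2) $\mathcal{D}(f)\circ^\nabla e=0$ for all $e\in\Gamma(E)$ and $f\in C^\infty(M)$.
   Context: An anchored metric bundle: a vector bundle $E\to M$ with pseudo-metric $\langle\cdot,\cdot\rangle$ and bundle map $a_E:E\to TM$. A metric connection: $\mathbb{R}$-bilinear $\nabla$ with $\nabla_{fe_1}e_2=f\nabla_{e_1}e_2$, $\nabla_{e_1}(fe_2)=a_E(e_1)(f)e_2+f\nabla_{e_1}e_2$, $a_E(e_1)\langle e_2,e_3\rangle=\langle\nabla_{e_1}e_2,e_3\rangle+\langle e_2,\nabla_{e_1}e_3\rangle$. $\mathcal{D}:C^\infty(M)\to\Gamma(E)$ is defined by $\langle\mathcal{D}(f),e\rangle=a_E(e)(f)$. The Courant curvature is $C^\nabla(e_1,e_2)=\nabla_{e_1}\nabla_{e_2}-\nabla_{e_2}\nabla_{e_1}-\nabla_{e_1\circ^\nabla e_2}$. $(E,\langle\cdot,\cdot\rangle,\circ^\nabla,a_E)$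 is always a metric algebroid (i.e. $a_E(e)\langle h_1,h_2\rangle=\langle e\circ h_1,h_2\rangle+\langle h_1,e\circ h_2\rangle$ and $e\circ e=\tfrac12\mathcal{D}\langle e,e\rangle$); a pre-Courant algebroid is a metric algebroid with $a_E(e_1\circ e_2)=[a_E(e_1),a_E(e_2)]$ for all $e_1,e_2$. *)

theory Defs
  imports Main "HOL.Real_Vector_Spaces"
begin

text \<open>Smooth functions C^infinity(M) are modelled by a set Cinf of real-valued
functions on M (type 'm) closed under the pointwise algebra operations; smooth sections
Gamma(E) are modelled by a real vector space 'e with a C^infinity(M)-action sm.
The pseudo-metric is g, the anchor is anc (anc e is the vector field a_E(e),
acting on functions as a derivation), and all operations are pointwise.\<close>

definition fun_algebra :: "('m \<Rightarrow> real) set \<Rightarrow> bool" where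
  "fun_algebra Cinf \<longleftrightarrow>
     (\<forall>c. (\<lambda>x. c) \<in> Cinf) \<and>
     (\<forall>f\<in>Cinf. \<forall>h\<in>Cinf. (\<lambda>x. f x + h x) \<in> Cinf) \<and>
     (\<forall>f\<in>Cinf. \<forall>h\<in>Cinf. (\<lambda>x. f x * h x) \<in> Cinf) \<and>
     (\<forall>f\<in>Cinf. (\<lambda>x. - f x) \<in> Cinf)"

definition anchored_metric_bundle ::
  "('m \<Rightarrow> real) set \<Rightarrow> (('m \<Rightarrow> real) \<Rightarrow> 'e::real_vector \<Rightarrow> 'e) \<Rightarrow>
   ('e \<Rightarrow> 'e \<Rightarrow> ('m \<Rightarrow> real)) \<Rightarrow> ('e \<Rightarrow> ('m \<Rightarrow> real) \<Rightarrow> ('m \<Rightarrow> real)) \<Rightarrow> bool" where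
  "anchored_metric_bundle Cinf sm g anc \<longleftrightarrow>
     fun_algebra Cinf \<and>
     \<comment> \<open>Gamma(E) is a C^infinity(M)-module, compatible with its real structure\<close>
     (\<forall>f\<in>Cinf. \<forall>h\<in>Cinf. \<forall>e. sm (\<lambda>x. f x * h x) e = sm f (sm h e)) \<and>
     (\<forall>f\<in>Cinf. \<forall>h\<in>Cinf. \<forall>e. sm (\<lambda>x. f x + h x) e = sm f e + sm h e) \<and>
     (\<forall>f\<in>Cinf. \<forall>e e'. sm f (e + e') = sm f e + sm f e') \<and>
     (\<forall>c e. sm (\<lambda>x. c) e = c *\<^sub>R e) \<and>
     \<comment> \<open>pseudo-metric: symmetric, C^infinity(M)-bilinear, nondegenerate\<close>
     (\<forall>e h. g e h \<in> Cinf) \<and>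
     (\<forall>e h. g e h = g h e) \<and>
     (\<forall>e e' h. g (e + e') h = (\<lambda>x. g e h x + g e' h x)) \<and>
     (\<forall>f\<in>Cinf. \<forall>e h. g (sm f e) h = (\<lambda>x. f x * g e h x)) \<and>
     (\<forall>e. (\<forall>h. g e h = (\<lambda>x. 0)) \<longrightarrow> e = 0) \<and>
     \<comment> \<open>anchor: a_E(e) is a vector field (an R-linear derivation of C^infinity(M))\<close>
     (\<forall>e. \<forall>f\<in>Cinf. anc e f \<in> Cinf) \<and>
     (\<forall>e. \<forall>f\<in>Cinf. \<forall>h\<in>Cinf. anc e (\<lambda>x. f x + h x) = (\<lambda>x. anc e f x + anc e h x)) \<and>
     (\<forall>e. \<forall>f\<in>Cinf. \<forall>c. anc e (\<lambda>x. c * f x) = (\<lambda>x. c * anc e f x)) \<and>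
     (\<forall>e. \<forall>f\<in>Cinf. \<forall>h\<in>Cinf.
        anc e (\<lambda>x. f x * h x) = (\<lambda>x. f x * anc e h x + anc e f x * h x)) \<and>
     \<comment> \<open>anchor is a bundle map, i.e. C^infinity(M)-linear in e\<close>
     (\<forall>e e'. \<forall>f\<in>Cinf. anc (e + e') f = (\<lambda>x. anc e f x + anc e' f x)) \<and>
     (\<forall>h\<in>Cinf. \<forall>e. \<forall>f\<in>Cinf. anc (sm h e) f = (\<lambda>x. h x * anc e f x))"

definition metric_connection ::
  "('m \<Rightarrow> real) set \<Rightarrow> (('m \<Rightarrow> real) \<Rightarrow> 'e::real_vector \<Rightarrow> 'e) \<Rightarrow>
   ('e \<Rightarrow> 'e \<Rightarrow> ('m \<Rightarrow> real)) \<Rightarrow> ('e \<Rightarrow> ('m \<Rightarrow> real) \<Rightarrow> ('m \<Rightarrow> real)) \<Rightarrow>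
   ('e \<Rightarrow> 'e \<Rightarrow> 'e) \<Rightarrow> bool" where
  "metric_connection Cinf sm g anc nab \<longleftrightarrow>
     (\<forall>e1 e1' e2. nab (e1 + e1') e2 = nab e1 e2 + nab e1' e2) \<and>
     (\<forall>e1 e2 e2'. nab e1 (e2 + e2') = nab e1 e2 + nab e1 e2') \<and>
     (\<forall>c e1 e2. nab (c *\<^sub>R e1) e2 = c *\<^sub>R nab e1 e2) \<and>
     (\<forall>c e1 e2. nab e1 (c *\<^sub>R e2) = c *\<^sub>R nab e1 e2) \<and>
     (\<forall>f\<in>Cinf. \<forall>e1 e2. nab (sm f e1) e2 = sm f (nab e1 e2)) \<and>
     (\<forall>f\<in>Cinf. \<forall>e1 e2. nab e1 (sm f e2) = sm (anc e1 f) e2 + sm f (nab e1 e2)) \<and>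
     (\<forall>e1 e2 e3. anc e1 (g e2 e3) = (\<lambda>x. g (nab e1 e2) e3 x + g e2 (nab e1 e3) x))"

definition is_D ::
  "('m \<Rightarrow> real) set \<Rightarrow> ('e \<Rightarrow> 'e \<Rightarrow> ('m \<Rightarrow> real)) \<Rightarrow>
   ('e \<Rightarrow> ('m \<Rightarrow> real) \<Rightarrow> ('m \<Rightarrow> real)) \<Rightarrow> (('m \<Rightarrow> real) \<Rightarrow> 'e) \<Rightarrow> bool" where
  "is_D Cinf g anc D \<longleftrightarrow> (\<forall>f\<in>Cinf. \<forall>e. g (D f) e = anc e f)"

definition is_nabla_bracket ::
  "('e \<Rightarrow> 'e \<Rightarrow> ('m \<Rightarrow> real)) \<Rightarrow> ('e \<Rightarrow> 'e \<Rightarrow> 'e) \<Rightarrow> ('e \<Rightarrow> 'e \<Rightarrow> 'e) \<Rightarrow> bool" where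
  "is_nabla_bracket g nab circ \<longleftrightarrow>
     (\<forall>e1 e2 e3. g (circ e1 e2) e3 =
        (\<lambda>x. g (nab e1 e2) e3 x - g (nab e2 e1) e3 x + g (nab e3 e1) e2 x))"

definition courant_curvature ::
  "('e::real_vector \<Rightarrow> 'e \<Rightarrow> 'e) \<Rightarrow> ('e \<Rightarrow> 'e \<Rightarrow> 'e) \<Rightarrow> 'e \<Rightarrow> 'e \<Rightarrow> 'e \<Rightarrow> 'e" where
  "courant_curvature nab circ e1 e2 e3 =
     nab e1 (nab e2 e3) - nab e2 (nab e1 e3) - nab (circ e1 e2) e3"

definition Cinf_linear ::
  "('m \<Rightarrow> real) set \<Rightarrow> (('m \<Rightarrow> real) \<Rightarrow> 'e::real_vector \<Rightarrow> 'e) \<Rightarrow> ('e \<Rightarrow> 'e) \<Rightarrow> bool" where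
  "Cinf_linear Cinf sm T \<longleftrightarrow>
     (\<forall>e e'. T (e + e') = T e + T e') \<and> (\<forall>f\<in>Cinf. \<forall>e. T (sm f e) = sm f (T e))"

definition metric_algebroid ::
  "('m \<Rightarrow> real) set \<Rightarrow> ('e::real_vector \<Rightarrow> 'e \<Rightarrow> ('m \<Rightarrow> real)) \<Rightarrow> ('e \<Rightarrow> 'e \<Rightarrow> 'e) \<Rightarrow>
   ('e \<Rightarrow> ('m \<Rightarrow> real) \<Rightarrow> ('m \<Rightarrow> real)) \<Rightarrow> (('m \<Rightarrow> real) \<Rightarrow> 'e) \<Rightarrow> bool" where
  "metric_algebroid Cinf g circ anc D \<longleftrightarrow>
     (\<forall>e h1 h2. anc e (g h1 h2) = (\<lambda>x. g (circ e h1) h2 x + g h1 (circ e h2) x)) \<and>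
     (\<forall>e. circ e e = (1/2) *\<^sub>R D (g e e))"

definition pre_courant_algebroid ::
  "('m \<Rightarrow> real) set \<Rightarrow> ('e::real_vector \<Rightarrow> 'e \<Rightarrow> ('m \<Rightarrow> real)) \<Rightarrow> ('e \<Rightarrow> 'e \<Rightarrow> 'e) \<Rightarrow>
   ('e \<Rightarrow> ('m \<Rightarrow> real) \<Rightarrow> ('m \<Rightarrow> real)) \<Rightarrow> (('m \<Rightarrow> real) \<Rightarrow> 'e) \<Rightarrow> bool" where
  "pre_courant_algebroid Cinf g circ anc D \<longleftrightarrow>
     metric_algebroid Cinf g circ anc D \<and>
     (\<forall>e1 e2. \<forall>f\<in>Cinf. anc (circ e1 e2) f =
        (\<lambda>x. anc e1 (anc e2 f) x - anc e2 (anc e1 f) x))"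

end

theory Submission
  imports Defs
begin

theorem proposition3p8:
  fixes Cinf :: "('m \<Rightarrow> real) set"
    and sm :: "('m \<Rightarrow> real) \<Rightarrow> 'e::real_vector \<Rightarrow> 'e"
    and g :: "'e \<Rightarrow> 'e \<Rightarrow> ('m \<Rightarrow> real)"
    and anc :: "'e \<Rightarrow> ('m \<Rightarrow> real) \<Rightarrow> ('m \<Rightarrow> real)"
    and nab :: "'e \<Rightarrow> 'e \<Rightarrow> 'e"
    and D :: "('m \<Rightarrow> real) \<Rightarrow> 'e"
    and circ :: "'e \<Rightarrow> 'e \<Rightarrow> 'e"
  assumes "anchored_metric_bundle Cinf sm g anc"
    and "metric_connection Cinf sm g anc nab"
    and "is_D Cinf g anc D"
    and "is_nabla_bracket g nab circ"
  shows "(pre_courant_algebroid Cinf g circ anc D \<longleftrightarrow>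
            (\<forall>e1 e2. Cinf_linear Cinf sm (courant_curvature nab circ e1 e2)))
       \<and> (pre_courant_algebroid Cinf g circ anc D \<longleftrightarrow>
            (\<forall>e. \<forall>f\<in>Cinf. circ (D f) e = 0))"
proof -
  have Cc: "\<And>c. (\<lambda>x. c) \<in> Cinf" using assms(1) unfolding anchored_metric_bundle_def fun_algebra_def by (elim conjE allE) assumption
  have Cadd: "\<And>f h. f \<in> Cinf \<Longrightarrow> h \<in> Cinf \<Longrightarrow> (\<lambda>x. f x + h x) \<in> Cinf"
    using assms(1) unfolding anchored_metric_bundle_def fun_algebra_def by auto
  have Cneg: "\<And>f. f \<in> Cinf \<Longrightarrow> (\<lambda>x. - f x) \<in> Cinf"
    using assms(1) unfolding anchored_metric_bundle_def fun_algebra_def by auto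
  have smadd: "\<And>f h e. f \<in> Cinf \<Longrightarrow> h \<in> Cinf \<Longrightarrow> sm (\<lambda>x. f x + h x) e = sm f e + sm h e"
    using assms(1) unfolding anchored_metric_bundle_def by auto
  have smadde: "\<And>f e e'. f \<in> Cinf \<Longrightarrow> sm f (e + e') = sm f e + sm f e'"
    using assms(1) unfolding anchored_metric_bundle_def by auto
  have smc: "\<And>c e. sm (\<lambda>x. c) e = c *\<^sub>R e"
    using assms(1) unfolding anchored_metric_bundle_def by auto
  have gC: "\<And>e h. g e h \<in> Cinf" using assms(1) unfolding anchored_metric_bundle_def by auto
  have gsym: "\<And>e h. g e h = g h e" using assms(1) unfolding anchored_metric_bundle_def by auto
  have gadd0: "\<forall>e e' h. g (e + e') h = (\<lambda>x. g e h x + g e' h x)"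
    using assms(1) unfolding anchored_metric_bundle_def by (elim conjE) assumption
  have gadd: "\<And>e e' h x. g (e + e') h x = g e h x + g e' h x"
    using gadd0 by simp
  have gsm0: "\<forall>f\<in>Cinf. \<forall>e h. g (sm f e) h = (\<lambda>x. f x * g e h x)"
    using assms(1) unfolding anchored_metric_bundle_def by (elim conjE) assumption
  have gsm: "\<And>f e h x. f \<in> Cinf \<Longrightarrow> g (sm f e) h x = f x * g e h x"
    using gsm0 by simp
  have gnd0: "\<And>e. (\<forall>h. g e h = (\<lambda>x. 0)) \<Longrightarrow> e = 0"
    using assms(1) unfolding anchored_metric_bundle_def by auto
  have ancC: "\<And>e f. f \<in> Cinf \<Longrightarrow> anc e f \<in> Cinf"
    using assms(1) unfolding anchored_metric_bundle_def by auto
  have ancadde: "\<And>e e' f x. f \<in> Cinf \<Longrightarrow> anc (e + e') f x = anc e f x + anc e' f x"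
    using assms(1) unfolding anchored_metric_bundle_def by simp
  have nadd2: "\<And>e1 e2 e2'. nab e1 (e2 + e2') = nab e1 e2 + nab e1 e2'"
    using assms(2) unfolding metric_connection_def by auto
  have nsm2: "\<And>f e1 e2. f \<in> Cinf \<Longrightarrow> nab e1 (sm f e2) = sm (anc e1 f) e2 + sm f (nab e1 e2)"
    using assms(2) unfolding metric_connection_def by auto
  have nmet: "\<And>e1 e2 e3 x. anc e1 (g e2 e3) x = g (nab e1 e2) e3 x + g e2 (nab e1 e3) x"
    using assms(2) unfolding metric_connection_def by simp
  have gD: "\<And>f e. f \<in> Cinf \<Longrightarrow> g (D f) e = anc e f"
    using assms(3) unfolding is_D_def by auto
  have gcirc: "\<And>e1 e2 e3 x. g (circ e1 e2) e3 x =
        g (nab e1 e2) e3 x - g (nab e2 e1) e3 x + g (nab e3 e1) e2 x"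
    using assms(4) unfolding is_nabla_bracket_def by simp
  have g0: "\<And>h x. g 0 h x = 0"
    using gadd[of 0 0] by simp
  have gminus: "\<And>a b h x. g (a - b) h x = g a h x - g b h x"
    using gadd by (metis add_diff_cancel_right' diff_add_cancel)
  have gscal: "\<And>c a h x. g (c *\<^sub>R a) h x = c * g a h x"
    using gsm[OF Cc] smc by metis
  have gnd: "\<And>e. (\<And>h x. g e h x = 0) \<Longrightarrow> e = 0"
    using gnd0 by blast
  have smminus: "\<And>f e e'. f \<in> Cinf \<Longrightarrow> sm f (e - e') = sm f e - sm f e'"
    using smadde by (metis add_diff_cancel_right' diff_add_cancel)
  have smneg: "\<And>q e. q \<in> Cinf \<Longrightarrow> sm (\<lambda>x. - q x) e = - sm q e"
  proof -
    fix q e assume q: "q \<in> Cinf"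
    have "sm (\<lambda>x. q x + - q x) e = sm q e + sm (\<lambda>x. - q x) e" using smadd[OF q Cneg[OF q]] .
    moreover have "sm (\<lambda>x. q x + - q x) e = 0" using smc[of 0 e] by simp
    ultimately show "sm (\<lambda>x. - q x) e = - sm q e" by (simp add: eq_neg_iff_add_eq_0 add.commute)
  qed
  have smsub: "\<And>p q e. p \<in> Cinf \<Longrightarrow> q \<in> Cinf \<Longrightarrow> sm (\<lambda>x. p x - q x) e = sm p e - sm q e"
  proof -
    fix p q e assume p: "p \<in> Cinf" and q: "q \<in> Cinf"
    have "sm (\<lambda>x. p x + - q x) e = sm p e + sm (\<lambda>x. - q x) e" using smadd[OF p Cneg[OF q]] .
    then show "sm (\<lambda>x. p x - q x) e = sm p e - sm q e" using smneg[OF q] by simp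
  qed
  have Csub: "\<And>p q. p \<in> Cinf \<Longrightarrow> q \<in> Cinf \<Longrightarrow> (\<lambda>x. p x - q x) \<in> Cinf"
    using Cadd Cneg by (metis (no_types, lifting) ext diff_conv_add_uminus Cadd)
  have K: "\<And>f e h x. f \<in> Cinf \<Longrightarrow> g (circ (D f) e) h x =
      anc (circ e h) f x - anc e (anc h f) x + anc h (anc e f) x"
  proof -
    fix f e h x assume f: "f \<in> Cinf"
    have 1: "g (circ (D f) e) h x = g (nab (D f) e) h x - g (nab e (D f)) h x + g (nab h (D f)) e x"
      by (rule gcirc)
    have 2: "anc e (anc h f) x = g (nab e (D f)) h x + anc (nab e h) f x"
      using nmet[of e "D f" h x] gD[OF f] by simp
    have 3: "anc h (anc e f) x = g (nab h (D f)) e x + anc (nab h e) f x"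
      using nmet[of h "D f" e x] gD[OF f] by simp
    have 4: "anc (circ e h) f x = anc (nab e h) f x - anc (nab h e) f x + g (nab (D f) e) h x"
      using gcirc[of e h "D f" x] gD[OF f] gsym by metis
    show "g (circ (D f) e) h x = anc (circ e h) f x - anc e (anc h f) x + anc h (anc e f) x"
      using 1 2 3 4 by linarith
  qed
  have MA: "metric_algebroid Cinf g circ anc D"
    unfolding metric_algebroid_def
  proof (intro conjI allI)
    fix e h1 h2
    show "anc e (g h1 h2) = (\<lambda>x. g (circ e h1) h2 x + g h1 (circ e h2) x)"
    proof
      fix x
      have "g h1 (circ e h2) x = g (circ e h2) h1 x" using gsym by metis
      moreover have "g (nab h1 e) h2 x = g h2 (nab h1 e) x" "g (nab h2 e) h1 x = g h1 (nab h2 e) x"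
        "g (nab e h2) h1 x = g h1 (nab e h2) x" using gsym by metis+
      ultimately show "anc e (g h1 h2) x = g (circ e h1) h2 x + g h1 (circ e h2) x"
        using gcirc[of e h1 h2 x] gcirc[of e h2 h1 x] nmet[of e h1 h2 x] by linarith
    qed
  next
    fix e
    show "circ e e = (1/2) *\<^sub>R D (g e e)"
    proof -
      have "g (circ e e - (1/2) *\<^sub>R D (g e e)) h x = 0" for h x
      proof -
        have a: "g (circ e e) h x = g (nab h e) e x" using gcirc[of e e h x] by simp
        have b: "anc h (g e e) x = 2 * g (nab h e) e x" using nmet[of h e e x] gsym by (metis mult_2)
        have c: "g (D (g e e)) h x = anc h (g e e) x" using gD[OF gC] by simp
        show ?thesis using a b c gminus gscal by simp
      qed
      then show ?thesis using gnd by (metis eq_iff_diff_eq_0)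
    qed
  qed
  define phi where "phi = (\<lambda>e1 e2 f x. anc e1 (anc e2 f) x - anc e2 (anc e1 f) x - anc (circ e1 e2) f x)"
  have phiC: "\<And>e1 e2 f. f \<in> Cinf \<Longrightarrow> phi e1 e2 f \<in> Cinf"
    unfolding phi_def by (intro Csub ancC)
  have PC: "pre_courant_algebroid Cinf g circ anc D \<longleftrightarrow>
      (\<forall>e1 e2. \<forall>f\<in>Cinf. \<forall>x. phi e1 e2 f x = 0)"
    unfolding pre_courant_algebroid_def phi_def using MA
    by (auto simp: fun_eq_iff)
  have P2: "(\<forall>e. \<forall>f\<in>Cinf. circ (D f) e = 0) \<longleftrightarrow> (\<forall>e1 e2. \<forall>f\<in>Cinf. \<forall>x. phi e1 e2 f x = 0)"
  proof
    assume H: "\<forall>e. \<forall>f\<in>Cinf. circ (D f) e = 0"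
    show "\<forall>e1 e2. \<forall>f\<in>Cinf. \<forall>x. phi e1 e2 f x = 0"
    proof (intro allI ballI)
      fix e1 e2 f x assume f: "f \<in> Cinf"
      have "g (circ (D f) e1) e2 x = 0" using H f g0 by simp
      then show "phi e1 e2 f x = 0" using K[OF f, of e1 e2 x] unfolding phi_def by linarith
    qed
  next
    assume H: "\<forall>e1 e2. \<forall>f\<in>Cinf. \<forall>x. phi e1 e2 f x = 0"
    show "\<forall>e. \<forall>f\<in>Cinf. circ (D f) e = 0"
    proof (intro allI ballI)
      fix e f assume f: "f \<in> Cinf"
      show "circ (D f) e = 0"
      proof (rule gnd)
        fix h x
        show "g (circ (D f) e) h x = 0" using H f K[OF f, of e h x] unfolding phi_def
          by (metis add.commute diff_add_eq diff_diff_eq2 diff_zero eq_iff_diff_eq_0)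
      qed
    qed
  qed
  have CC: "\<And>e1 e2 f e. f \<in> Cinf \<Longrightarrow> courant_curvature nab circ e1 e2 (sm f e)
       = sm f (courant_curvature nab circ e1 e2 e) + sm (phi e1 e2 f) e"
  proof -
    fix e1 e2 f e assume f: "f \<in> Cinf"
    have a2: "anc e2 f \<in> Cinf" "anc e1 f \<in> Cinf" using ancC f by auto
    have L1: "nab e1 (nab e2 (sm f e)) = sm (anc e1 (anc e2 f)) e + sm (anc e2 f) (nab e1 e)
        + sm (anc e1 f) (nab e2 e) + sm f (nab e1 (nab e2 e))"
      using nsm2 f a2 nadd2 by (simp add: add.assoc)
    have L2: "nab e2 (nab e1 (sm f e)) = sm (anc e2 (anc e1 f)) e + sm (anc e1 f) (nab e2 e)
        + sm (anc e2 f) (nab e1 e) + sm f (nab e2 (nab e1 e))"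
      using nsm2 f a2 nadd2 by (simp add: add.assoc)
    have L3: "nab (circ e1 e2) (sm f e) = sm (anc (circ e1 e2) f) e + sm f (nab (circ e1 e2) e)"
      using nsm2 f by simp
    have S: "sm (phi e1 e2 f) e = sm (anc e1 (anc e2 f)) e - sm (anc e2 (anc e1 f)) e - sm (anc (circ e1 e2) f) e"
      unfolding phi_def using smsub Csub ancC a2 f by simp
    show "courant_curvature nab circ e1 e2 (sm f e)
       = sm f (courant_curvature nab circ e1 e2 e) + sm (phi e1 e2 f) e"
      proof -
      have M: "sm f (nab e1 (nab e2 e) - nab e2 (nab e1 e) - nab (circ e1 e2) e) =
        sm f (nab e1 (nab e2 e)) - sm f (nab e2 (nab e1 e)) - sm f (nab (circ e1 e2) e)"
        using smminus[OF f] by simp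
      show ?thesis unfolding courant_curvature_def L1 L2 L3 S M by (simp add: algebra_simps)
    qed
  qed
  have CCadd: "\<And>e1 e2 e e'. courant_curvature nab circ e1 e2 (e + e') =
      courant_curvature nab circ e1 e2 e + courant_curvature nab circ e1 e2 e'"
    unfolding courant_curvature_def using nadd2 by (simp add: algebra_simps)
  have P1: "(\<forall>e1 e2. Cinf_linear Cinf sm (courant_curvature nab circ e1 e2)) \<longleftrightarrow>
      (\<forall>e1 e2. \<forall>f\<in>Cinf. \<forall>x. phi e1 e2 f x = 0)"
  proof
    assume H: "\<forall>e1 e2. Cinf_linear Cinf sm (courant_curvature nab circ e1 e2)"
    show "\<forall>e1 e2. \<forall>f\<in>Cinf. \<forall>x. phi e1 e2 f x = 0"
    proof (intro allI ballI)
      fix e1 e2 f x assume f: "f \<in> Cinf"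
      have Z: "sm (phi e1 e2 f) e = 0" for e
        using H CC[OF f, of e1 e2 e] f unfolding Cinf_linear_def by simp
      show "phi e1 e2 f x = 0"
      proof (cases "\<exists>a b. g a b x \<noteq> 0")
        case True
        then obtain a b where ab: "g a b x \<noteq> 0" by blast
        have "phi e1 e2 f x * g a b x = 0"
          using gsm[OF phiC[OF f], of e1 e2 a b x] Z[of a] g0 by simp
        then show ?thesis using ab by simp
      next
        case False
        have z: "\<And>e k. k \<in> Cinf \<Longrightarrow> anc e k x = 0"
          using False gD by metis
        show ?thesis unfolding phi_def using z ancC f by simp
      qed
    qed
  next
    assume H: "\<forall>e1 e2. \<forall>f\<in>Cinf. \<forall>x. phi e1 e2 f x = 0"
    show "\<forall>e1 e2. Cinf_linear Cinf sm (courant_curvature nab circ e1 e2)"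
    proof (intro allI)
      fix e1 e2
      have "\<And>f. f \<in> Cinf \<Longrightarrow> phi e1 e2 f = (\<lambda>x. 0)" using H by auto
      then show "Cinf_linear Cinf sm (courant_curvature nab circ e1 e2)"
        unfolding Cinf_linear_def using CCadd CC smc by simp
    qed
  qed
  show ?thesis using PC P1 P2 by blast
qed

end
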